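(* For any subgroup $\mathcal M\le\mathcal P_n$, $$\mathrm{rank}\,\overline D^{(\mathcal M)}=\mathrm{rank}\,\overline D'^{(\mathcal M)}=\mathrm{rank}\,D^{(\mathcal M)}=\mathrm{rank}\,D'^{(\mathcal M)}=|\mathcal C^{*(\mathcal M)}|,$$ where $\mathcal C^{*(\mathcal M)}$ is the set of nontrivial syndrome classes of $\mathcal E_\Gamma$ with respect to $\mathcal M$.
   Context: $\mathcal P_n$ is the $n$-qubit Pauli group without phases; $\langle A,B\rangle=0$ if $A,B$ commute and $1$ otherwise. $\Gamma$ is a finite collection of supports $\gamma\subseteq\{1,\dots,n\}$; $\mathcal E_\gamma$ is the set of non-identity Paulis supported in $\gamma$; $\mathcal E_\Gamma$ is the disjoint union of the $\mathcal E_\gamma$ (the same operator from different supports counted separately) and $\overline{\mathcal E}_\Gamma=\bigcup_\gamma\mathcal E_\gamma$ as a set of operators. For a set $\mathcal H\subseteq\mathcal P_n$, the syndrome of $e$ is $(\langle e,h\rangle)_{h\in\mathcal H}$; syndrome classes are the equivalence classes of errors with equal syndrome; the class with all-zero syndrome is trivial, the others form $\mathcal C^{*(\mathcal H)}$. $D^{(\mathcal H)}$ is the $|\mathcal H|\times|\mathcal E_\Gamma|$ matrix with entries $\langle h,e\rangle$, and $\overline D^{(\mathcal H)}$ the analogous $|\mathcal H|\times|\overline{\mathcal E}_\Gamma|$ matrix. The reduced matrix $D'^{(\mathcal H)}$ is the $|\mathcal H|\times|\mathcal C^{*(\mathcal H)}|$ matrix keeping one column (a representative) for each nontrivial syndrome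 class of $\mathcal E_\Gamma$; $\overline D'^{(\mathcal H)}$ is defined likewise using the nontrivial syndrome classes of $\overline{\mathcal E}_\Gamma$. *)

theory Defs
  imports Main "Jordan_Normal_Form.DL_Rank"
begin

datatype pauli1 = PI | PX | PY | PZ

text \<open>Single-qubit product, phases dropped.\<close>
fun mult1 :: "pauli1 \<Rightarrow> pauli1 \<Rightarrow> pauli1" where
  "mult1 PI b = b"
| "mult1 a PI = a"
| "mult1 PX PX = PI" | "mult1 PY PY = PI" | "mult1 PZ PZ = PI"
| "mult1 PX PY = PZ" | "mult1 PY PX = PZ"
| "mult1 PY PZ = PX" | "mult1 PZ PY = PX"
| "mult1 PX PZ = PY" | "mult1 PZ PX = PY"

definition anticomm1 :: "pauli1 \<Rightarrow> pauli1 \<Rightarrow> bool" where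
  "anticomm1 a b \<longleftrightarrow> a \<noteq> PI \<and> b \<noteq> PI \<and> a \<noteq> b"

type_synonym pauli = "nat \<Rightarrow> pauli1"

definition pauli_group :: "nat \<Rightarrow> pauli set" where
  "pauli_group n = {P. \<forall>i. P i \<noteq> PI \<longrightarrow> i \<in> {1..n}}"

definition pid :: pauli where "pid = (\<lambda>_. PI)"

definition pmult :: "pauli \<Rightarrow> pauli \<Rightarrow> pauli" where
  "pmult P Q = (\<lambda>i. mult1 (P i) (Q i))"

text \<open>Symplectic form: True (=1) iff the operators anticommute.\<close>
definition symp :: "pauli \<Rightarrow> pauli \<Rightarrow> bool" where
  "symp A B \<longleftrightarrow> odd (card {i. anticomm1 (A i) (B i)})"

definition pauli_subgroup :: "nat \<Rightarrow> pauli set \<Rightarrow> bool" where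
  "pauli_subgroup n M \<longleftrightarrow> M \<subseteq> pauli_group n \<and> pid \<in> M \<and>
     (\<forall>A\<in>M. \<forall>B\<in>M. pmult A B \<in> M)"

definition E_sup :: "nat \<Rightarrow> nat set \<Rightarrow> pauli set" where
  "E_sup n \<gamma> = {P \<in> pauli_group n. P \<noteq> pid \<and> (\<forall>i. i \<notin> \<gamma> \<longrightarrow> P i = PI)}"

text \<open>E_Gamma: disjoint union, elements tagged with their support.\<close>
definition E_Gamma :: "nat \<Rightarrow> nat set set \<Rightarrow> (nat set \<times> pauli) set" where
  "E_Gamma n \<Gamma> = Sigma \<Gamma> (E_sup n)"

definition Ebar_Gamma :: "nat \<Rightarrow> nat set set \<Rightarrow> pauli set" where
  "Ebar_Gamma n \<Gamma> = (\<Union>\<gamma>\<in>\<Gamma>. E_sup n \<gamma>)"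

definition syndrome :: "pauli set \<Rightarrow> pauli \<Rightarrow> (pauli \<Rightarrow> bool)" where
  "syndrome H e = (\<lambda>h\<in>H. symp e h)"

text \<open>Syndrome classes of a set X of errors; op maps an element of X to its operator.\<close>
definition syndrome_classes :: "pauli set \<Rightarrow> 'e set \<Rightarrow> ('e \<Rightarrow> pauli) \<Rightarrow> 'e set set" where
  "syndrome_classes H X op =
     (\<lambda>x. {y \<in> X. syndrome H (op y) = syndrome H (op x)}) ` X"

definition nontrivial_classes :: "pauli set \<Rightarrow> 'e set \<Rightarrow> ('e \<Rightarrow> pauli) \<Rightarrow> 'e set set" where
  "nontrivial_classes H X op =
     {c \<in> syndrome_classes H X op. \<forall>x\<in>c. syndrome H (op x) \<noteq> (\<lambda>h\<in>H. False)}"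

definition enum_set :: "'a set \<Rightarrow> 'a list" where
  "enum_set S = (SOME xs. distinct xs \<and> set xs = S)"

definition index_mat :: "'r set \<Rightarrow> 'c set \<Rightarrow> ('r \<Rightarrow> 'c \<Rightarrow> real) \<Rightarrow> real mat" where
  "index_mat R C f = mat (card R) (card C) (\<lambda>(i, j). f (enum_set R ! i) (enum_set C ! j))"

definition mat_rank :: "real mat \<Rightarrow> nat" where
  "mat_rank A = vec_space.rank (dim_row A) A"

definition synd_mat :: "pauli set \<Rightarrow> 'e set \<Rightarrow> ('e \<Rightarrow> pauli) \<Rightarrow> real mat" where
  "synd_mat H X op = index_mat H X (\<lambda>h x. of_bool (symp h (op x)))"

definition red_mat :: "pauli set \<Rightarrow> 'e set \<Rightarrow> ('e \<Rightarrow> pauli) \<Rightarrow> real mat" where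
  "red_mat H X op = index_mat H (nontrivial_classes H X op)
      (\<lambda>h c. of_bool (symp h (op (SOME x. x \<in> c))))"

end

theory Submission
  imports Defs
begin


lemma anticomm1_mult: "anticomm1 (mult1 a b) c = (anticomm1 a c \<noteq> anticomm1 b c)"
  by (cases a; cases b; cases c) (auto simp: anticomm1_def)

lemma mult1_cancel: "mult1 a (mult1 a b) = b"
  by (cases a; cases b) auto

lemma anticomm1_sym: "anticomm1 a b = anticomm1 b a"
  by (auto simp: anticomm1_def)

lemma symp_sym: "symp A B = symp B A"
  unfolding symp_def by (simp add: anticomm1_sym)

lemma pmult_cancel: "pmult g (pmult g h) = h"
  by (simp add: pmult_def mult1_cancel)

lemma symp_pid: "\<not> symp pid e"
  by (simp add: symp_def pid_def anticomm1_def)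

lemma card_symdiff:
  assumes "finite A" "finite B"
  shows "card ((A - B) \<union> (B - A)) + 2 * card (A \<inter> B) = card A + card B"
proof -
  have "card ((A - B) \<union> (B - A)) = card (A - B) + card (B - A)"
    by (rule card_Un_disjoint) (use assms in auto)
  moreover have "card (A - B) + card (A \<inter> B) = card A"
    using assms by (metis Diff_Diff_Int card_Diff_subset Int_lower1 card_mono diff_add inf_commute finite_Int Int_Diff Diff_subset  le_add_diff_inverse2 card_Diff_subset_Int)
  moreover have "card (B - A) + card (A \<inter> B) = card B"
    using assms by (metis card_Diff_subset_Int finite_Int Int_lower2 card_mono le_add_diff_inverse2 inf_commute)
  ultimately show ?thesis by linarith
qed

lemma symp_pmult:
  assumes "A \<in> pauli_group n" "B \<in> pauli_group n"
  shows "symp (pmult A B) e = (symp A e \<noteq> symp B e)"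
proof -
  define SA where "SA = {i. anticomm1 (A i) (e i)}"
  define SB where "SB = {i. anticomm1 (B i) (e i)}"
  have fA: "finite SA"
    using assms by (intro finite_subset[of SA "{1..n}"]) (auto simp: SA_def pauli_group_def anticomm1_def)
  have fB: "finite SB"
    using assms by (intro finite_subset[of SB "{1..n}"]) (auto simp: SB_def pauli_group_def anticomm1_def)
  have "{i. anticomm1 (pmult A B i) (e i)} = (SA - SB) \<union> (SB - SA)"
    by (auto simp: SA_def SB_def pmult_def anticomm1_mult)
  moreover note card_symdiff[OF fA fB]
  ultimately show ?thesis unfolding symp_def SA_def[symmetric] SB_def[symmetric]
    by (metis even_add even_mult_iff even_numeral)
qed

lemma finite_pauli_group: "finite (pauli_group n)"
proof -
  have U: "(UNIV :: pauli1 set) = {PI, PX, PY, PZ}" using pauli1.exhaust by blast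
  have "pauli_group n \<subseteq> {f. \<forall>x. (x \<in> {1..n} \<longrightarrow> f x \<in> UNIV) \<and> (x \<notin> {1..n} \<longrightarrow> f x = PI)}"
    by (auto simp: pauli_group_def)
  moreover have "finite {f. \<forall>x. (x \<in> {1..n} \<longrightarrow> f x \<in> (UNIV :: pauli1 set)) \<and> (x \<notin> {1..n} \<longrightarrow> f x = PI)}"
    by (rule finite_set_of_finite_funs) (auto simp: U)
  ultimately show ?thesis by (rule finite_subset)
qed

lemma subgroup_facts:
  assumes "pauli_subgroup n M"
  shows "finite M" "pid \<in> M" "card M > 0" "\<And>g h. g \<in> M \<Longrightarrow> h \<in> M \<Longrightarrow> pmult g h \<in> M"
    "\<And>g. g \<in> M \<Longrightarrow> g \<in> pauli_group n"
  using assms finite_pauli_group[of n] finite_subset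
  by (auto simp: pauli_subgroup_def card_gt_0_iff)

lemma char_sum_zero:
  fixes \<tau> :: "pauli \<Rightarrow> bool"
  assumes M: "pauli_subgroup n M"
    and hom: "\<And>g h. g \<in> M \<Longrightarrow> h \<in> M \<Longrightarrow> \<tau> (pmult g h) = (\<tau> g \<noteq> \<tau> h)"
    and g: "g \<in> M" "\<tau> g"
  shows "(\<Sum>h\<in>M. (1 - 2 * of_bool (\<tau> h) :: real)) = 0"
proof -
  let ?f = "\<lambda>h. (1 - 2 * of_bool (\<tau> h) :: real)"
  have bij: "bij_betw (pmult g) M M"
  proof (rule bij_betwI[where g = "pmult g"])
    show "pmult g \<in> M \<rightarrow> M" using subgroup_facts(4)[OF M] g by auto
    show "pmult g \<in> M \<rightarrow> M" using subgroup_facts(4)[OF M] g by auto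
  qed (auto simp: pmult_cancel)
  have "(\<Sum>h\<in>M. ?f h) = (\<Sum>h\<in>M. ?f (pmult g h))"
    using sum.reindex_bij_betw[OF bij, of ?f] by simp
  also have "\<dots> = (\<Sum>h\<in>M. - ?f h)"
    by (rule sum.cong) (auto simp: hom g)
  also have "\<dots> = - (\<Sum>h\<in>M. ?f h)" by (simp only: sum_negf)
  finally show ?thesis by linarith
qed



lemma indep_core:
  fixes E :: "'v set" and ee :: "'v \<Rightarrow> pauli" and a :: "'v \<Rightarrow> real"
  assumes M: "pauli_subgroup n M" and fE: "finite E"
    and dist: "\<And>v w. v \<in> E \<Longrightarrow> w \<in> E \<Longrightarrow> v \<noteq> w \<Longrightarrow> \<exists>h\<in>M. symp h (ee v) \<noteq> symp h (ee w)"
    and ntr: "\<And>v. v \<in> E \<Longrightarrow> \<exists>h\<in>M. symp h (ee v)"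
    and eq: "\<And>h. h \<in> M \<Longrightarrow> (\<Sum>v\<in>E. a v * of_bool (symp h (ee v))) = 0"
    and w: "w \<in> E"
  shows "a w = 0"
proof -
  define \<chi> where "\<chi> v h = (1 - 2 * of_bool (symp h (ee v)) :: real)" for v h
  define c where "c = (\<Sum>v\<in>E. a v)"
  have fM: "finite M" and Mg: "\<And>g. g \<in> M \<Longrightarrow> g \<in> pauli_group n"
    and Mm: "\<And>g h. g \<in> M \<Longrightarrow> h \<in> M \<Longrightarrow> pmult g h \<in> M" and cM: "card M > 0"
    using subgroup_facts[OF M] by auto
  have symh: "symp (pmult g h) e = (symp g e \<noteq> symp h e)" if "g \<in> M" "h \<in> M" for g h e
    using symp_pmult[OF Mg[OF that(1)] Mg[OF that(2)]] .
  have 1: "(\<Sum>v\<in>E. a v * \<chi> v h) = c" if "h \<in> M" for h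
  proof -
    have "(\<Sum>v\<in>E. a v * \<chi> v h) = (\<Sum>v\<in>E. a v - 2 * (a v * of_bool (symp h (ee v))))"
      by (rule sum.cong) (auto simp: \<chi>_def algebra_simps)
    also have "\<dots> = c - 2 * (\<Sum>v\<in>E. a v * of_bool (symp h (ee v)))"
      by (simp add: c_def sum_subtractf sum_distrib_left)
    finally show ?thesis using eq[OF that] by simp
  qed
  have orth: "(\<Sum>h\<in>M. \<chi> v h * \<chi> w h) = 0" if vE: "v \<in> E" and vw: "v \<noteq> w" for v
  proof -
    obtain g where g: "g \<in> M" "symp g (ee v) \<noteq> symp g (ee w)" using dist[OF vE w vw] by blast
    have "(\<Sum>h\<in>M. \<chi> v h * \<chi> w h) = (\<Sum>h\<in>M. 1 - 2 * of_bool (symp h (ee v) \<noteq> symp h (ee w)))"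
      by (rule sum.cong) (auto simp: \<chi>_def)
    also have "\<dots> = 0"
      by (rule char_sum_zero[OF M, where \<tau>="\<lambda>h. symp h (ee v) \<noteq> symp h (ee w)", OF _ g]) (auto simp: symh)
    finally show ?thesis .
  qed
  have diag: "(\<Sum>h\<in>M. \<chi> w h * \<chi> w h) = real (card M)"
  proof -
    have "(\<Sum>h\<in>M. \<chi> w h * \<chi> w h) = (\<Sum>h\<in>M. 1)" by (rule sum.cong) (auto simp: \<chi>_def)
    then show ?thesis by simp
  qed
  have s0: "(\<Sum>h\<in>M. \<chi> w h) = 0"
  proof -
    obtain g where g: "g \<in> M" "symp g (ee w)" using ntr[OF w] by blast
    show ?thesis unfolding \<chi>_def
      by (rule char_sum_zero[OF M, where \<tau>="\<lambda>h. symp h (ee w)", OF _ g]) (auto simp: symh)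
  qed
  have "(\<Sum>h\<in>M. \<chi> w h * (\<Sum>v\<in>E. a v * \<chi> v h)) = (\<Sum>h\<in>M. \<chi> w h * c)"
    by (rule sum.cong) (auto simp: 1)
  also have "\<dots> = 0" by (simp add: sum_distrib_right[symmetric] s0)
  finally have A: "(\<Sum>h\<in>M. \<chi> w h * (\<Sum>v\<in>E. a v * \<chi> v h)) = 0" .
  have "(\<Sum>h\<in>M. \<chi> w h * (\<Sum>v\<in>E. a v * \<chi> v h)) = (\<Sum>v\<in>E. a v * (\<Sum>h\<in>M. \<chi> v h * \<chi> w h))"
    by (simp add: sum_distrib_left sum.swap[of _ E M] algebra_simps)
  also have "\<dots> = (\<Sum>v\<in>E. if v = w then a w * real (card M) else 0)"
    by (rule sum.cong) (auto simp: orth diag)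
  also have "\<dots> = a w * real (card M)" using fE w by simp
  finally show ?thesis using A cM by simp
qed



lemma enum_set_props:
  assumes "finite S"
  shows "distinct (enum_set S)" "set (enum_set S) = S" "length (enum_set S) = card S"
proof -
  have ex: "\<exists>xs. distinct xs \<and> set xs = S" using finite_distinct_list[OF assms] by blast
  have "distinct (enum_set S) \<and> set (enum_set S) = S"
    unfolding enum_set_def by (rule someI_ex[OF ex])
  then show "distinct (enum_set S)" "set (enum_set S) = S" "length (enum_set S) = card S"
    using distinct_card by fastforce+
qed

lemma index_mat_carrier: "index_mat R C f \<in> carrier_mat (card R) (card C)"
  by (simp add: index_mat_def)

lemma cols_index_mat:
  assumes "finite C"
  shows "set (cols (index_mat R C f)) = (\<lambda>c. vec (card R) (\<lambda>i. f (enum_set R ! i) c)) ` C"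
proof -
  have "set (cols (index_mat R C f)) = (\<lambda>j. col (index_mat R C f) j) ` {0..<card C}"
    by (simp add: cols_def index_mat_def)
  also have "\<dots> = (\<lambda>j. vec (card R) (\<lambda>i. f (enum_set R ! i) (enum_set C ! j))) ` {0..<card C}"
    by (rule image_cong) (auto simp: index_mat_def col_def)
  also have "\<dots> = (\<lambda>c. vec (card R) (\<lambda>i. f (enum_set R ! i) c)) ` ((\<lambda>j. enum_set C ! j) ` {0..<card C})"
    by (simp add: image_image)
  also have "(\<lambda>j. enum_set C ! j) ` {0..<card C} = C"
    using enum_set_props[OF assms] by (metis map_nth set_map set_upt)
  finally show ?thesis .
qed

definition cv :: "pauli set \<Rightarrow> pauli \<Rightarrow> real vec" where
  "cv M e = vec (card M) (\<lambda>i. of_bool (symp (enum_set M ! i) e))"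

lemma cv_eq:
  assumes "finite M"
  shows "cv M e = cv M e' \<longleftrightarrow> (\<forall>h\<in>M. symp h e = symp h e')"
proof
  assume "cv M e = cv M e'"
  then have "\<forall>i<card M. symp (enum_set M ! i) e = symp (enum_set M ! i) e'"
    by (auto simp: cv_def vec_eq_iff)
  then show "\<forall>h\<in>M. symp h e = symp h e'"
    using enum_set_props[OF assms] by (metis in_set_conv_nth)
next
  assume "\<forall>h\<in>M. symp h e = symp h e'"
  then show "cv M e = cv M e'"
    using enum_set_props[OF assms] by (auto simp: cv_def vec_eq_iff)
qed

lemma cv_zero:
  assumes "finite M"
  shows "cv M e = 0\<^sub>v (card M) \<longleftrightarrow> (\<forall>h\<in>M. \<not> symp h e)"
proof -
  have "0\<^sub>v (card M) = cv M pid" by (simp add: cv_def symp_sym[of _ pid] symp_pid vec_eq_iff)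
  then show ?thesis using cv_eq[OF assms, of e pid] by (simp add: symp_sym[of _ pid] symp_pid)
qed

lemma cv_index:
  assumes "finite M" "h \<in> M"
  obtains i where "i < card M" "enum_set M ! i = h" "\<And>e. cv M e $ i = of_bool (symp h e)"
proof -
  obtain i where i: "i < length (enum_set M)" "enum_set M ! i = h"
    using enum_set_props(2)[OF assms(1)] assms(2) by (metis in_set_conv_nth)
  then have "i < card M" using enum_set_props(3)[OF assms(1)] by simp
  then show ?thesis using that i(2) by (simp add: cv_def)
qed

lemma rank_cv:
  assumes M: "pauli_subgroup n M" and A: "A \<in> carrier_mat (card M) nc"
    and S: "set (cols A) - {0\<^sub>v (card M)} \<subseteq> range (cv M)"
  shows "vec_space.rank (card M) A = card (set (cols A) - {0\<^sub>v (card M)})"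
proof -
  interpret vec_space "TYPE(real)" "card M" .
  have fM: "finite M" using subgroup_facts[OF M] by auto
  define S where "S = set (cols A) - {0\<^sub>v (card M)}"
  have fS: "finite S" unfolding S_def by simp
  have Sc: "S \<subseteq> carrier_vec (card M)" using S by (auto simp: cv_def S_def)
  have ind: "lin_indpt S"
  proof
    assume ld: "lin_dep S"
    obtain a w where a: "lincomb a S = 0\<^sub>v (card M)" "w \<in> S" "a w \<noteq> 0"
      using finite_lin_dep[OF fS ld] Sc by auto
    define ee where "ee v = (SOME e. v = cv M e)" for v
    have ee: "v = cv M (ee v)" if "v \<in> S" for v
      using S that unfolding ee_def S_def by (metis (mono_tags, lifting) imageE someI_ex subsetD)
    have z: "0\<^sub>v (card M) \<notin> S" by (simp add: S_def)
    have "a w = 0"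
    proof (rule indep_core[OF M fS, where ee = ee])
      show "\<exists>h\<in>M. symp h (ee v) \<noteq> symp h (ee w)" if "v \<in> S" "w \<in> S" "v \<noteq> w" for v w
        using cv_eq[OF fM] ee that by metis
      show "\<exists>h\<in>M. symp h (ee v)" if "v \<in> S" for v
        using cv_zero[OF fM] ee that z by metis
      show "(\<Sum>v\<in>S. a v * of_bool (symp h (ee v))) = 0" if hM: "h \<in> M" for h
      proof -
        obtain i where i: "i < card M" "\<And>e. cv M e $ i = of_bool (symp h e)"
          using cv_index[OF fM hM] by metis
        have "lincomb a S $ i = (\<Sum>v\<in>S. a v * v $ i)" by (rule lincomb_index[OF i(1) Sc])
        also have "\<dots> = (\<Sum>v\<in>S. a v * of_bool (symp h (ee v)))"
          proof (rule sum.cong)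
          fix v assume "v \<in> S"
          then have "v $ i = cv M (ee v) $ i" using ee by metis
          then show "a v * v $ i = a v * of_bool (symp h (ee v))" using i(2) by simp
        qed simp
        finally show ?thesis using a(1) i(1) by simp
      qed
    qed (use a in auto)
    then show False using a by simp
  qed
  have "maximal S (\<lambda>T. T \<subseteq> set (cols A) \<and> lin_indpt T)"
    unfolding maximal_def
  proof (intro conjI allI impI)
    show "S \<subseteq> set (cols A)" by (auto simp: S_def)
    show "lin_indpt S" by (rule ind)
    fix B assume B: "S \<subseteq> B \<and> B \<subseteq> set (cols A) \<and> lin_indpt B"
    have dr: "dim_row A = card M" using A by auto
    have "B \<subseteq> carrier_vec (card M)" using B cols_dim[of A] unfolding dr by (meson subset_trans)
    then have "0\<^sub>v (card M) \<notin> B" using vs_zero_lin_dep[of B] B by simp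
    then show "B = S" using B by (auto simp: S_def)
  qed
  then show ?thesis using rank_card_indpt[OF A] by (simp add: S_def)
qed



lemma syn_cv:
  assumes "finite M"
  shows "(syndrome M e = syndrome M e') = (cv M e = cv M e')"
  unfolding cv_eq[OF assms] syndrome_def
  by (auto simp: restrict_def fun_eq_iff symp_sym[of e] symp_sym[of e'] split: if_splits)

lemma syn_zero:
  assumes "finite M"
  shows "(syndrome M e = (\<lambda>h\<in>M. False)) = (cv M e = 0\<^sub>v (card M))"
  unfolding cv_zero[OF assms] syndrome_def
  by (auto simp: restrict_def fun_eq_iff symp_sym[of e] split: if_splits)

lemma rank_synd:
  assumes M: "pauli_subgroup n M" and X: "finite X"
  shows "mat_rank (synd_mat M X op) = card (cv M ` op ` X - {0\<^sub>v (card M)})"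
proof -
  have c: "set (cols (synd_mat M X op)) = cv M ` op ` X"
    unfolding synd_mat_def cols_index_mat[OF X] by (auto simp: cv_def)
  have car: "synd_mat M X op \<in> carrier_mat (card M) (card X)" by (simp add: synd_mat_def index_mat_carrier)
  have "dim_row (synd_mat M X op) = card M" by (simp add: synd_mat_def index_mat_def)
  moreover have "vec_space.rank (card M) (synd_mat M X op) = card (set (cols (synd_mat M X op)) - {0\<^sub>v (card M)})"
    by (rule rank_cv[OF M car]) (use c in auto)
  ultimately show ?thesis unfolding mat_rank_def c by simp
qed

lemma classes_facts:
  fixes op :: "'e \<Rightarrow> pauli" and X :: "'e set"
  assumes M: "finite M" and X: "finite X"
    and cls_def: "cls = (\<lambda>x. {y \<in> X. syndrome M (op y) = syndrome M (op x)})"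
    and rep_def: "rep = (\<lambda>c. SOME x. x \<in> c)"
  shows "nontrivial_classes M X op = cls ` {x \<in> X. cv M (op x) \<noteq> 0\<^sub>v (card M)}"
    and "\<And>x. x \<in> X \<Longrightarrow> rep (cls x) \<in> X \<and> cv M (op (rep (cls x))) = cv M (op x)"
    and "\<And>x y. x \<in> X \<Longrightarrow> y \<in> X \<Longrightarrow> cv M (op x) = cv M (op y) \<Longrightarrow> cls x = cls y"
proof -
  have cl: "y \<in> cls x \<longleftrightarrow> y \<in> X \<and> cv M (op y) = cv M (op x)" for x y
    by (simp add: cls_def syn_cv[OF M])
  show repc: "rep (cls x) \<in> X \<and> cv M (op (rep (cls x))) = cv M (op x)" if "x \<in> X" for x
  proof -
    have "x \<in> cls x" using cl that by simp
    then have "rep (cls x) \<in> cls x" unfolding rep_def by (rule someI)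
    then show ?thesis using cl by simp
  qed
  show "cls x = cls y" if "x \<in> X" "y \<in> X" "cv M (op x) = cv M (op y)" for x y
    using cl that by auto
  show "nontrivial_classes M X op = cls ` {x \<in> X. cv M (op x) \<noteq> 0\<^sub>v (card M)}"
  proof
    show "nontrivial_classes M X op \<subseteq> cls ` {x \<in> X. cv M (op x) \<noteq> 0\<^sub>v (card M)}"
    proof
      fix c assume "c \<in> nontrivial_classes M X op"
      then obtain x where x: "x \<in> X" "c = cls x" "\<forall>y\<in>c. cv M (op y) \<noteq> 0\<^sub>v (card M)"
        unfolding nontrivial_classes_def syndrome_classes_def cls_def syn_zero[OF M] by auto
      then have "x \<in> c" using cl by simp
      then show "c \<in> cls ` {x \<in> X. cv M (op x) \<noteq> 0\<^sub>v (card M)}" using x by auto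
    qed
    show "cls ` {x \<in> X. cv M (op x) \<noteq> 0\<^sub>v (card M)} \<subseteq> nontrivial_classes M X op"
    proof
      fix c assume "c \<in> cls ` {x \<in> X. cv M (op x) \<noteq> 0\<^sub>v (card M)}"
      then obtain x where x: "x \<in> X" "c = cls x" "cv M (op x) \<noteq> 0\<^sub>v (card M)" by auto
      have "c \<in> syndrome_classes M X op" using x unfolding syndrome_classes_def cls_def by auto
      moreover have "\<forall>y\<in>c. syndrome M (op y) \<noteq> (\<lambda>h\<in>M. False)"
        using x cl by (auto simp: syn_zero[OF M])
      ultimately show "c \<in> nontrivial_classes M X op" unfolding nontrivial_classes_def by auto
    qed
  qed
qed

lemma red_facts:
  assumes M: "pauli_subgroup n M" and X: "finite X"
  shows "mat_rank (red_mat M X op) = card (cv M ` op ` X - {0\<^sub>v (card M)})"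
    and "card (nontrivial_classes M X op) = card (cv M ` op ` X - {0\<^sub>v (card M)})"
proof -
  have fM: "finite M" using subgroup_facts[OF M] by auto
  define cls where "cls = (\<lambda>x. {y \<in> X. syndrome M (op y) = syndrome M (op x)})"
  define rep where "rep = (\<lambda>c::'a set. SOME x. x \<in> c)"
  define NX where "NX = {x \<in> X. cv M (op x) \<noteq> 0\<^sub>v (card M)}"
  note cf = classes_facts[OF fM X cls_def rep_def, folded NX_def]
  let ?g = "\<lambda>c. cv M (op (rep c))"
  have fin: "finite (nontrivial_classes M X op)" unfolding cf(1) NX_def using X by simp
  have img: "?g ` nontrivial_classes M X op = cv M ` op ` X - {0\<^sub>v (card M)}"
  proof
    show "?g ` nontrivial_classes M X op \<subseteq> cv M ` op ` X - {0\<^sub>v (card M)}"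
    proof
      fix v assume "v \<in> ?g ` nontrivial_classes M X op"
      then obtain x where x: "x \<in> X" "cv M (op x) \<noteq> 0\<^sub>v (card M)" "v = ?g (cls x)"
        unfolding cf(1) NX_def by auto
      then show "v \<in> cv M ` op ` X - {0\<^sub>v (card M)}" using cf(2)[OF x(1)] by auto
    qed
    show "cv M ` op ` X - {0\<^sub>v (card M)} \<subseteq> ?g ` nontrivial_classes M X op"
    proof
      fix v assume "v \<in> cv M ` op ` X - {0\<^sub>v (card M)}"
      then obtain x where x: "x \<in> X" "cv M (op x) \<noteq> 0\<^sub>v (card M)" "v = cv M (op x)" by auto
      then have "cls x \<in> nontrivial_classes M X op" unfolding cf(1) NX_def by auto
      moreover have "v = ?g (cls x)" using cf(2)[OF x(1)] x(3) by simp
      ultimately show "v \<in> ?g ` nontrivial_classes M X op" by blast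
    qed
  qed
  have inj: "inj_on ?g (nontrivial_classes M X op)"
  proof (rule inj_onI)
    fix c1 c2 assume c: "c1 \<in> nontrivial_classes M X op" "c2 \<in> nontrivial_classes M X op" "?g c1 = ?g c2"
    obtain x1 where x1: "x1 \<in> X" "c1 = cls x1" using c(1) unfolding cf(1) NX_def by auto
    obtain x2 where x2: "x2 \<in> X" "c2 = cls x2" using c(2) unfolding cf(1) NX_def by auto
    have "cv M (op x1) = cv M (op x2)" using c(3) cf(2)[OF x1(1)] cf(2)[OF x2(1)] x1 x2 by simp
    then show "c1 = c2" using cf(3)[OF x1(1) x2(1)] x1 x2 by simp
  qed
  show "card (nontrivial_classes M X op) = card (cv M ` op ` X - {0\<^sub>v (card M)})"
    using card_image[OF inj] img by simp
  have c: "set (cols (red_mat M X op)) = cv M ` op ` X - {0\<^sub>v (card M)}"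
    unfolding red_mat_def cols_index_mat[OF fin] img[symmetric] rep_def by (auto simp: cv_def)
  have car: "red_mat M X op \<in> carrier_mat (card M) (card (nontrivial_classes M X op))" by (simp add: red_mat_def index_mat_carrier)
  have "dim_row (red_mat M X op) = card M" by (simp add: red_mat_def index_mat_def)
  moreover have "vec_space.rank (card M) (red_mat M X op) = card (set (cols (red_mat M X op)) - {0\<^sub>v (card M)})"
    by (rule rank_cv[OF M car]) (use c in auto)
  ultimately show "mat_rank (red_mat M X op) = card (cv M ` op ` X - {0\<^sub>v (card M)})"
    unfolding mat_rank_def c by simp
qed



theorem lemma3:
  fixes n :: nat and \<Gamma> :: "nat set set" and M :: "pauli set"
  assumes "finite \<Gamma>"
    and "\<forall>\<gamma>\<in>\<Gamma>. \<gamma> \<subseteq> {1..n}"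
    and "pauli_subgroup n M"
  shows "mat_rank (synd_mat M (Ebar_Gamma n \<Gamma>) id) = card (nontrivial_classes M (E_Gamma n \<Gamma>) snd)
       \<and> mat_rank (red_mat M (Ebar_Gamma n \<Gamma>) id) = card (nontrivial_classes M (E_Gamma n \<Gamma>) snd)
       \<and> mat_rank (synd_mat M (E_Gamma n \<Gamma>) snd) = card (nontrivial_classes M (E_Gamma n \<Gamma>) snd)
       \<and> mat_rank (red_mat M (E_Gamma n \<Gamma>) snd) = card (nontrivial_classes M (E_Gamma n \<Gamma>) snd)"
proof -
  have sub: "E_sup n \<gamma> \<subseteq> pauli_group n" for \<gamma> by (auto simp: E_sup_def)
  have fEb: "finite (Ebar_Gamma n \<Gamma>)"
    by (rule finite_subset[OF _ finite_pauli_group[of n]]) (use sub in \<open>auto simp: Ebar_Gamma_def\<close>)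
  have fE: "finite (E_Gamma n \<Gamma>)" unfolding E_Gamma_def
    using assms(1) finite_subset[OF sub finite_pauli_group] by (intro finite_SigmaI) auto
  have img: "snd ` E_Gamma n \<Gamma> = Ebar_Gamma n \<Gamma>"
    by (force simp: E_Gamma_def Ebar_Gamma_def)
  have idi: "id ` Ebar_Gamma n \<Gamma> = Ebar_Gamma n \<Gamma>" by simp
  note M = assms(3)
  show ?thesis
    using rank_synd[OF M fEb, of id] red_facts[OF M fEb, of id]
      rank_synd[OF M fE, of snd] red_facts[OF M fE, of snd]
    unfolding img idi by simp
qed

end
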